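(* Consider the downlink of a multi-RIS multi-user MIMO system in which a base station (BS) with $M$ antennas serves $U_d$ direct users and $K$ blocked users, the $k$-th blocked user being served only through the $k$-th reconfigurable intelligent surface (RIS), which has $N$ elements. Let $\mathbf{H}_k\in\mathbb{C}^{M\times N}$ be the BS–RIS-$k$ channel, $\mathbf{h}_{k,1}=(h_{k,1},\dots,h_{k,N})^T\in\mathbb{C}^N$ the RIS-$k$–user channel (so $h_{k,i}$ is its $i$-th entry), and $\mathbf{h}_{d,u}\in\mathbb{C}^M$ the BS–direct-user-$u$ channel, all with complex normal entries, $\mathbb{E}\{\mathbf{H}_k^H\mathbf{H}_k\}=\mathbf{R}_k$ (invertible) and $\mathbb{E}\{\mathbf{H}_k^H\mathbf{H}_{k'}\}=\mathbf{0}$ for $k\ne k'$. Let $\mathbf{Q}_2=[\mathbf{H}_1\ \cdots\ \mathbf{H}_K\ \mathbf{h}_{d,1}\ \cdots\ \mathbf{h}_{d,U_d}]^H\in\mathbb{C}^{(NK+U_d)\times M}$ and let $\boldsymbol{\Gamma}\in\mathbb{R}^{(NK+U_d)\times(K+U_d)}$ be the matrix whose $k$-th column ($k\le K$) has ones in rows $(k-1)N+1,\dots,kN$ and zeros elsewhere, and whose last $U_d$ columns are $\begin{bmatrix}\mathbf{0}_{NK\times U_d}\\ \mathbf{I}_{U_d}\end{bmatrix}$. Use the beamforming matrix $\mathbf{W}'_{\mathrm{ZF}}=\mathbf{Q}_2^H(\mathbf{Q}_2\mathbf{Q}_2^H)^{-1}\boldsymbol{\Gamma}$, so that the SINR of the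 blocked user of RIS $k$ with phase shifts $\phi_{k,1},\dots,\phi_{k,N}$ is $$\mathrm{SINR}_{b,k,1}=\frac{\Big|\sum_{i=1}^{N}e^{j\phi_{k,i}}h_{k,i}^{*}\big[\mathbf{H}_k^H\mathbf{Q}_2^H(\mathbf{Q}_2\mathbf{Q}_2^H)^{-1}\boldsymbol{\Gamma}\mathbf{e}_k\big]_i\Big|^2}{\sigma_k^2}.$$ Then, as $M\to\infty$, the phase shifts of the $k$-th RIS that maximize this SINR are $$\phi_{k,i}=-\sphericalangle\big(h_{k,i}^{*}f_{k,i}\big),\qquad i=1,\dots,N,$$ and the maximum SINR is $$\mathrm{SINR}^{*}_{b,k,1}=\frac{1}{\sigma_k^2}\Big(\sum_{i=1}^{N}|f_{k,i}|\,|h_{k,i}|\Big)^2,$$ where $f_{k,i}$ is the $i$-th entry of $$\mathbf{f}_k=\begin{bmatrix}\mathbf{0}_{N\times(k-1)N} & \mathbf{R}_k & \mathbf{0}_{N\times((K-k)N+U_d)}\end{bmatrix}\,\mathrm{blkdiag}\big(\mathbf{R}_1^{-1},\dots,\mathbf{R}_K^{-1},\mathbf{I}_{U_d}\big)\,\boldsymbol{\Gamma}\,\mathbf{e}_k.$$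
   Context: $\mathbf{e}_k$ is the $k$-th standard unit vector of $\mathbb{R}^{K+U_d}$, $\sigma_k^2>0$ is the noise power at the user, $\sphericalangle(z)$ denotes the argument of a complex number $z$, $^*$ complex conjugation, $^H$ conjugate transpose, and $\mathrm{blkdiag}(\cdot)$ the block-diagonal matrix formed from its arguments. The beamformer requires $M>NK+U_d$. The asymptotic regime $M\to\infty$ refers to the limit in which inner products of BS-side channel columns converge to their expectations, i.e. $\mathbf{H}_k^H\mathbf{H}_n\to\mathbf{R}_k$ if $n=k$ and $\to\mathbf{0}$ if $n\ne k$. *)

theory Defs
  imports "HOL-Analysis.Analysis" "Jordan_Normal_Form.Determinant"
begin

definition cT :: "complex mat \<Rightarrow> complex mat" where
  "cT A = mat (dim_col A) (dim_row A) (\<lambda>(i,j). cnj (A $$ (j,i)))"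

text \<open>Matrix inverse via the adjugate (the true inverse whenever det A is nonzero).\<close>
definition minv :: "complex mat \<Rightarrow> complex mat" where
  "minv A = (1 / det A) \<cdot>\<^sub>m adj_mat A"

definition mat_tendsto :: "(nat \<Rightarrow> complex mat) \<Rightarrow> complex mat \<Rightarrow> bool" where
  "mat_tendsto A B \<longleftrightarrow> (\<forall>\<^sub>F M in sequentially. A M \<in> carrier_mat (dim_row B) (dim_col B)) \<and>
     (\<forall>i < dim_row B. \<forall>j < dim_col B. ((\<lambda>M. A M $$ (i,j)) \<longlongrightarrow> B $$ (i,j)) sequentially)"

definition vec_tendsto :: "(nat \<Rightarrow> complex vec) \<Rightarrow> complex vec \<Rightarrow> bool" where
  "vec_tendsto v w \<longleftrightarrow> (\<forall>\<^sub>F M in sequentially. dim_vec (v M) = dim_vec w) \<and>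
     (\<forall>i < dim_vec w. ((\<lambda>M. v M $ i) \<longlongrightarrow> w $ i) sequentially)"

text \<open>Q2^H (an M x (NK+Ud) matrix): columns of H_1,...,H_K, then h_{d,1},...,h_{d,Ud}.
  Indices of RIS and users are 0-based.\<close>
definition Q2H :: "nat \<Rightarrow> nat \<Rightarrow> nat \<Rightarrow> nat \<Rightarrow> (nat \<Rightarrow> complex mat) \<Rightarrow> (nat \<Rightarrow> complex vec) \<Rightarrow> complex mat" where
  "Q2H M N K Ud H hdu = mat M (N*K + Ud)
     (\<lambda>(i,j). if j < N*K then H (j div N) $$ (i, j mod N) else hdu (j - N*K) $ i)"

definition Gamma :: "nat \<Rightarrow> nat \<Rightarrow> nat \<Rightarrow> complex mat" where
  "Gamma N K Ud = mat (N*K + Ud) (K + Ud)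
     (\<lambda>(i,j). if j < K then (if i < N*K \<and> i div N = j then 1 else 0)
              else (if N*K \<le> i \<and> i - N*K = j - K then 1 else 0))"

definition blkdiag_inv :: "nat \<Rightarrow> nat \<Rightarrow> nat \<Rightarrow> (nat \<Rightarrow> complex mat) \<Rightarrow> complex mat" where
  "blkdiag_inv N K Ud R = mat (N*K + Ud) (N*K + Ud)
     (\<lambda>(i,j). if i < N*K \<and> j < N*K then
                 (if i div N = j div N then minv (R (i div N)) $$ (i mod N, j mod N) else 0)
              else if N*K \<le> i \<and> N*K \<le> j then (if i = j then 1 else 0) else 0)"

text \<open>The row-block selector [0_{N x kN}  R_k  0_{N x ((K-k-1)N+Ud)}] (k 0-based).\<close>
definition row_sel :: "nat \<Rightarrow> nat \<Rightarrow> nat \<Rightarrow> (nat \<Rightarrow> complex mat) \<Rightarrow> nat \<Rightarrow> complex mat" where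
  "row_sel N K Ud R k = mat N (N*K + Ud)
     (\<lambda>(i,j). if k*N \<le> j \<and> j < (k+1)*N then R k $$ (i, j - k*N) else 0)"

definition f_vec :: "nat \<Rightarrow> nat \<Rightarrow> nat \<Rightarrow> (nat \<Rightarrow> complex mat) \<Rightarrow> nat \<Rightarrow> complex vec" where
  "f_vec N K Ud R k = col (row_sel N K Ud R k * blkdiag_inv N K Ud R * Gamma N K Ud) k"

definition zf_vec :: "nat \<Rightarrow> nat \<Rightarrow> nat \<Rightarrow> nat \<Rightarrow> (nat \<Rightarrow> complex mat) \<Rightarrow> (nat \<Rightarrow> complex vec) \<Rightarrow> nat \<Rightarrow> complex vec" where
  "zf_vec M N K Ud H hdu k =
     (let Q = Q2H M N K Ud H hdu in
      col (cT (H k) * Q * minv (cT Q * Q) * Gamma N K Ud) k)"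

definition sinr :: "nat \<Rightarrow> real \<Rightarrow> complex vec \<Rightarrow> complex vec \<Rightarrow> (nat \<Rightarrow> real) \<Rightarrow> real" where
  "sinr N sigma2 h v phi = (cmod (\<Sum>i<N. exp (\<i> * complex_of_real (phi i)) * cnj (h $ i) * v $ i))\<^sup>2 / sigma2"

end

theory Submission
  imports Defs
begin


lemma minv_right:
  assumes A: "A \<in> carrier_mat n n" and d: "det A \<noteq> 0"
  shows "A * minv A = 1\<^sub>m n"
proof -
  have "A * minv A = (1 / det A) \<cdot>\<^sub>m (A * adj_mat A)"
    unfolding minv_def using A adj_mat(1)[OF A] by (simp add: mult_smult_distrib)
  also have "\<dots> = 1\<^sub>m n" using adj_mat(2)[OF A] d by (auto intro!: eq_matI)
  finally show ?thesis .
qed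

lemma invertible_det:
  assumes inv: "invertible_mat A" and A: "A \<in> carrier_mat n n"
  shows "det (A :: complex mat) \<noteq> 0"
proof -
  obtain B where AB: "A * B = 1\<^sub>m n" and BA: "B * A = 1\<^sub>m (dim_row B)"
    using inv A unfolding invertible_mat_def inverts_mat_def by auto
  have "dim_col B = n" using arg_cong[OF AB, of dim_col] by simp
  moreover have "dim_row B = n" using arg_cong[OF BA, of dim_col] A by simp
  ultimately have B: "B \<in> carrier_mat n n" by auto
  have "det A * det B = 1" using det_mult[OF A B] AB by simp
  then show ?thesis by auto
qed

lemma block_sum:
  fixes g :: "nat \<Rightarrow> complex"
  assumes a: "a < K" and n: "N*K \<le> n"
    and z: "\<And>l. l < n \<Longrightarrow> \<not> (a*N \<le> l \<and> l < a*N + N) \<Longrightarrow> g l = 0"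
  shows "(\<Sum>l\<in>{0..<n}. g l) = (\<Sum>c\<in>{0..<N}. g (a*N + c))"
proof -
  have sub: "{a*N..<a*N+N} \<subseteq> {0..<n}"
  proof -
    have "a*N + N \<le> K*N" using a by (metis add.commute mult_Suc less_eq_Suc_le mult_le_mono1)
    then show ?thesis using n by (auto simp: mult.commute)
  qed
  have "(\<Sum>l\<in>{0..<n}. g l) = (\<Sum>l\<in>{a*N..<a*N+N}. g l)"
    by (rule sum.mono_neutral_right) (use sub z in auto)
  also have "\<dots> = (\<Sum>c\<in>{0..<N}. g (a*N + c))"
    using sum.atLeastLessThan_shift_bounds[of g 0 "a*N" N] by (simp add: add.commute o_def)
  finally show ?thesis .
qed

lemma sum_delta_mult: "(c::nat) < n \<Longrightarrow> (\<Sum>i\<in>{0..<n}. (if i = c then 1 else 0) * f i) = (f c :: complex)"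
  by (subst sum.cong[OF refl, of _ _ "\<lambda>i. if i = c then f i else 0"]) (auto simp: sum.delta)

lemma Gamma_dims[simp]: "dim_row (Gamma N K Ud) = N*K+Ud" "dim_col (Gamma N K Ud) = K+Ud"
  by (simp_all add: Gamma_def)

definition Sel :: "nat \<Rightarrow> nat \<Rightarrow> nat \<Rightarrow> complex mat" where
  "Sel N n k = mat N n (\<lambda>(a,b). if b = k*N + a then 1 else 0)"

lemma Sel_carrier[simp]: "Sel N n k \<in> carrier_mat N n"
  by (simp add: Sel_def)

lemma Sel_dims[simp]: "dim_row (Sel N n k) = N" "dim_col (Sel N n k) = n"
  by (simp_all add: Sel_def)

lemma Sel_mult:
  assumes A: "A \<in> carrier_mat n m" and a: "a < N" and j: "j < m" and kn: "k*N + a < n"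
  shows "(Sel N n k * A) $$ (a,j) = A $$ (k*N+a, j)"
proof -
  have "(Sel N n k * A) $$ (a,j) = (\<Sum>i\<in>{0..<n}. (if i = k*N+a then 1 else 0) * A$$(i,j))"
    using A a j kn by (auto simp add: Sel_def scalar_prod_def)
  then show ?thesis using kn sum_delta_mult[of "k*N+a" n "\<lambda>i. A$$(i,j)"] by simp
qed

lemma mult_mod_lt: "(k::nat) < K \<Longrightarrow> a < N \<Longrightarrow> k*N + a < N*K"
proof -
  assume "k < K" "a < N"
  then have "k*N + a < k*N + N" by linarith
  also have "\<dots> = (Suc k)*N" by simp
  also have "\<dots> \<le> K*N" using \<open>k<K\<close> by (intro mult_le_mono1) simp
  finally show ?thesis by (simp add: mult.commute)
qed

lemma Sel_Gamma:
  assumes k: "k < K"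
  shows "col (Sel N (N*K+Ud) k * Gamma N K Ud) k = vec N (\<lambda>_. 1)"
proof (rule eq_vecI)
  show "dim_vec (col (Sel N (N*K+Ud) k * Gamma N K Ud) k) = dim_vec (vec N (\<lambda>_. 1::complex))"
    by simp
  fix a assume "a < dim_vec (vec N (\<lambda>_. 1::complex))"
  then have a: "a < N" by simp
  have lt: "k*N + a < N*K" using mult_mod_lt[OF k a] .
  have G: "Gamma N K Ud \<in> carrier_mat (N*K+Ud) (K+Ud)" by (simp add: Gamma_def)
  have "col (Sel N (N*K+Ud) k * Gamma N K Ud) k $ a = (Sel N (N*K+Ud) k * Gamma N K Ud) $$ (a,k)"
    using a k by simp
  also have "\<dots> = Gamma N K Ud $$ (k*N+a, k)"
    using Sel_mult[OF G a, of k k] lt k by simp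
  also have "\<dots> = 1" using lt k a by (simp add: Gamma_def)
  finally show "col (Sel N (N*K+Ud) k * Gamma N K Ud) k $ a = vec N (\<lambda>_. 1) $ a" using a by simp
qed

lemma div_block: "0 < (N::nat) \<Longrightarrow> (l div N = a) = (a*N \<le> l \<and> l < a*N+N)"
  by (metis add_diff_inverse_nat diff_add_inverse2 div_less_iff_less_mult
    div_times_less_eq_dividend le_less_Suc_eq less_eq_div_iff_mult_less_eq
    mult_Suc not_add_less2)

lemma div_lt_K: "(i::nat) < N*K \<Longrightarrow> i div N < K"
  by (simp add: less_mult_imp_div_less mult.commute)

lemma block_idx: "(c::nat) < N \<Longrightarrow> (a*N + c) div N = a \<and> (a*N + c) mod N = c"
  by simp

definition Lmat :: "nat \<Rightarrow> nat \<Rightarrow> nat \<Rightarrow> (nat \<Rightarrow> complex mat) \<Rightarrow> complex mat" where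
  "Lmat N K Ud R = mat (N*K+Ud) (N*K+Ud) (\<lambda>(i,j). if i < N*K \<and> j < N*K then
     (if i div N = j div N then R (i div N) $$ (i mod N, j mod N) else 0)
     else if N*K \<le> i \<and> N*K \<le> j then (if i = j then 1 else 0) else 0)"

lemma Lmat_carrier[simp]: "Lmat N K Ud R \<in> carrier_mat (N*K+Ud) (N*K+Ud)"
  by (simp add: Lmat_def)

lemma binv_carrier[simp]: "blkdiag_inv N K Ud R \<in> carrier_mat (N*K+Ud) (N*K+Ud)"
  by (simp add: blkdiag_inv_def)

lemma minv_carrier: "A \<in> carrier_mat n n \<Longrightarrow> minv A \<in> carrier_mat n n"
  unfolding minv_def using adj_mat(1)[of A n] by simp

lemma LB:
  assumes Rdim: "\<And>n. n < K \<Longrightarrow> R n \<in> carrier_mat N N"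
    and Rinv: "\<And>n. n < K \<Longrightarrow> invertible_mat (R n)"
  shows "Lmat N K Ud R * blkdiag_inv N K Ud R = 1\<^sub>m (N*K+Ud)"
proof (rule eq_matI)
  let ?n = "N*K+Ud"
  let ?L = "Lmat N K Ud R" and ?B = "blkdiag_inv N K Ud R"
  show "dim_row (?L * ?B) = dim_row (1\<^sub>m ?n)" "dim_col (?L * ?B) = dim_col (1\<^sub>m ?n)"
    by (simp_all add: Lmat_def blkdiag_inv_def)
  fix i j assume "i < dim_row (1\<^sub>m ?n)" "j < dim_col (1\<^sub>m ?n)"
  then have i: "i < ?n" and j: "j < ?n" by auto
  have e: "(?L * ?B) $$ (i,j) = (\<Sum>l\<in>{0..<?n}. ?L $$ (i,l) * ?B $$ (l,j))"
    using i j by (simp add: scalar_prod_def Lmat_def blkdiag_inv_def)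
  show "(?L * ?B) $$ (i,j) = 1\<^sub>m ?n $$ (i,j)"
  proof (cases "i < N*K")
    case True
    define a where "a = i div N"
    have a: "a < K" using div_lt_K[OF True] a_def by simp
    have N0: "0 < N" using True by (cases N) auto
    have ia: "i = a*N + i mod N" using a_def by simp
    have im: "i mod N < N" using N0 by simp
    have "(\<Sum>l\<in>{0..<?n}. ?L $$ (i,l) * ?B $$ (l,j)) = (\<Sum>c\<in>{0..<N}. ?L $$ (i,a*N+c) * ?B $$ (a*N+c,j))"
    proof (rule block_sum[OF a])
      show "N*K \<le> ?n" by simp
      fix l assume l: "l < ?n" "\<not> (a * N \<le> l \<and> l < a * N + N)"
      then have "l div N \<noteq> a" using div_block[OF N0] by simp
      then show "?L $$ (i,l) * ?B $$ (l,j) = 0" using l True a_def by (simp add: Lmat_def)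
    qed
    also have "\<dots> = (\<Sum>c\<in>{0..<N}. R a $$ (i mod N, c) * ?B $$ (a*N+c,j))"
    proof (rule sum.cong[OF refl])
      fix c assume c: "c \<in> {0..<N}"
      then have lt: "a*N+c < N*K" using mult_mod_lt[OF a] by simp
      show "?L $$ (i,a*N+c) * ?B $$ (a*N+c,j) = R a $$ (i mod N, c) * ?B $$ (a*N+c,j)"
        using c lt True a_def by (simp add: Lmat_def)
    qed
    also have "\<dots> = 1\<^sub>m ?n $$ (i,j)"
    proof (cases "j < N*K \<and> j div N = a")
      case jT: True
      have jm: "j mod N < N" using N0 by simp
      have ja: "j = a*N + j mod N" using jT by (metis div_mult_mod_eq)
      have RI: "R a * minv (R a) = 1\<^sub>m N"
        using minv_right[OF Rdim[OF a] invertible_det[OF Rinv[OF a] Rdim[OF a]]] .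
      have "(\<Sum>c\<in>{0..<N}. R a $$ (i mod N, c) * ?B $$ (a*N+c,j))
          = (\<Sum>c\<in>{0..<N}. R a $$ (i mod N, c) * minv (R a) $$ (c, j mod N))"
      proof (rule sum.cong[OF refl])
        fix c assume c: "c \<in> {0..<N}"
        then have lt: "a*N+c < N*K" using mult_mod_lt[OF a] by simp
        show "R a $$ (i mod N, c) * ?B $$ (a*N+c,j) = R a $$ (i mod N, c) * minv (R a) $$ (c, j mod N)"
          using c lt jT by (simp add: blkdiag_inv_def)
      qed
      also have "\<dots> = (R a * minv (R a)) $$ (i mod N, j mod N)"
        using Rdim[OF a] minv_carrier[OF Rdim[OF a]] im jm by (simp add: scalar_prod_def)
      also have "\<dots> = 1\<^sub>m ?n $$ (i,j)"
        unfolding RI using im jm i j ia ja by auto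
      finally show ?thesis .
    next
      case jF: False
      have "?B $$ (a*N+c,j) = 0" if c: "c < N" for c
      proof -
        have lt: "a*N+c < N*K" using mult_mod_lt[OF a c] by simp
        show ?thesis using jF lt c j by (auto simp add: blkdiag_inv_def)
      qed
      moreover have "i \<noteq> j" using jF True a_def by auto
      ultimately show ?thesis using i j by simp
    qed
    finally show ?thesis using e by simp
  next
    case False
    have "(\<Sum>l\<in>{0..<?n}. ?L $$ (i,l) * ?B $$ (l,j)) = (\<Sum>l\<in>{0..<?n}. (if l = i then 1 else 0) * ?B $$ (l,j))"
      by (rule sum.cong[OF refl]) (use False i in \<open>auto simp: Lmat_def\<close>)
    also have "\<dots> = ?B $$ (i,j)" using sum_delta_mult[OF i] .
    also have "\<dots> = 1\<^sub>m ?n $$ (i,j)" using False i j by (simp add: blkdiag_inv_def)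
    finally show ?thesis using e by simp
  qed
qed

lemma row_sel_eq:
  assumes k: "k < K"
  shows "row_sel N K Ud R k = Sel N (N*K+Ud) k * Lmat N K Ud R"
proof (rule eq_matI)
  show "dim_row (row_sel N K Ud R k) = dim_row (Sel N (N*K+Ud) k * Lmat N K Ud R)"
       "dim_col (row_sel N K Ud R k) = dim_col (Sel N (N*K+Ud) k * Lmat N K Ud R)"
    by (simp_all add: row_sel_def Lmat_def)
  fix a l assume "a < dim_row (Sel N (N*K+Ud) k * Lmat N K Ud R)" "l < dim_col (Sel N (N*K+Ud) k * Lmat N K Ud R)"
  then have a: "a < N" and l: "l < N*K+Ud" by (simp_all add: Lmat_def)
  have N0: "0 < N" using a by simp
  have lt: "k*N + a < N*K" using mult_mod_lt[OF k a] .
  have "(Sel N (N*K+Ud) k * Lmat N K Ud R) $$ (a,l) = Lmat N K Ud R $$ (k*N+a, l)"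
    using Sel_mult[OF Lmat_carrier a l] lt by simp
  also have "\<dots> = row_sel N K Ud R k $$ (a,l)"
  proof (cases "k*N \<le> l \<and> l < (k+1)*N")
    case True
    then have ld: "l div N = k" using div_block[OF N0] by simp
    then have "l mod N = l - k*N" by (metis minus_div_mult_eq_mod)
    moreover have "l < N*K"
    proof -
      have "k*N + (l - k*N) < N*K" using True by (intro mult_mod_lt[OF k]) auto
      then show ?thesis using True by simp
    qed
    ultimately show ?thesis using True ld lt a l by (simp add: Lmat_def row_sel_def)
  next
    case False
    then have "\<not> (k*N \<le> l \<and> l < k*N+N)" by (simp add: add.commute)
    then have "l div N \<noteq> k" using div_block[OF N0] by simp
    then show ?thesis using False lt a l by (auto simp add: Lmat_def row_sel_def)
  qed
  finally show "row_sel N K Ud R k $$ (a,l) = (Sel N (N*K+Ud) k * Lmat N K Ud R) $$ (a,l)" by simp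
qed

lemma f_vec_ones:
  assumes k: "k < K"
    and Rdim: "\<And>n. n < K \<Longrightarrow> R n \<in> carrier_mat N N"
    and Rinv: "\<And>n. n < K \<Longrightarrow> invertible_mat (R n)"
  shows "f_vec N K Ud R k = vec N (\<lambda>_. 1)"
proof -
  let ?S = "Sel N (N*K+Ud) k" and ?L = "Lmat N K Ud R" and ?B = "blkdiag_inv N K Ud R"
  have G: "Gamma N K Ud \<in> carrier_mat (N*K+Ud) (K+Ud)" by (simp add: Gamma_def)
  have "row_sel N K Ud R k * ?B * Gamma N K Ud = ?S * (?L * ?B) * Gamma N K Ud"
    unfolding row_sel_eq[OF k] by (subst assoc_mult_mat[of _ N "N*K+Ud" _ "N*K+Ud" _ "N*K+Ud"]) auto
  also have "\<dots> = ?S * Gamma N K Ud"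
  proof -
    have "?L * ?B = 1\<^sub>m (N*K+Ud)" by (rule LB[OF Rdim Rinv])
    then show ?thesis using right_mult_one_mat[OF Sel_carrier] by simp
  qed
  finally show ?thesis unfolding f_vec_def using Sel_Gamma[OF k] by simp
qed

lemma exp_Arg: "exp (\<i> * complex_of_real (- Arg z)) * z = complex_of_real (cmod z)"
proof -
  have "exp (\<i> * complex_of_real (- Arg z)) = cis (- Arg z)" by (simp add: cis_conv_exp)
  moreover have "z = complex_of_real (cmod z) * cis (Arg z)" using rcis_cmod_Arg[of z] by (simp add: rcis_def)
  ultimately have "exp (\<i> * complex_of_real (- Arg z)) * z = complex_of_real (cmod z) * (cis (- Arg z) * cis (Arg z))"
    by (metis mult.left_commute)
  also have "\<dots> = complex_of_real (cmod z)" by (simp add: cis_mult)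
  finally show ?thesis .
qed

lemma sinr_opt:
  assumes sigma: "sigma2 > 0"
  shows "(\<forall>phi. sinr N sigma2 h f phi \<le> sinr N sigma2 h f (\<lambda>i. - Arg (cnj (h $ i) * f $ i)))
     \<and> sinr N sigma2 h f (\<lambda>i. - Arg (cnj (h $ i) * f $ i)) = (\<Sum>i<N. cmod (f $ i) * cmod (h $ i))\<^sup>2 / sigma2"
proof -
  let ?S = "(\<Sum>i<N. cmod (f $ i) * cmod (h $ i))"
  have opt: "sinr N sigma2 h f (\<lambda>i. - Arg (cnj (h $ i) * f $ i)) = ?S\<^sup>2 / sigma2"
  proof -
    have "(\<Sum>i<N. exp (\<i> * complex_of_real (- Arg (cnj (h $ i) * f $ i))) * cnj (h $ i) * f $ i)
        = (\<Sum>i<N. complex_of_real (cmod (f $ i) * cmod (h $ i)))"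
    proof (rule sum.cong[OF refl])
      fix i
      have "exp (\<i> * complex_of_real (- Arg (cnj (h $ i) * f $ i))) * cnj (h $ i) * f $ i
         = complex_of_real (cmod (cnj (h $ i) * f $ i))"
        using exp_Arg[of "cnj (h $ i) * f $ i"] by (simp add: mult.assoc)
      also have "\<dots> = complex_of_real (cmod (f $ i) * cmod (h $ i))" by (simp add: norm_mult)
      finally show "exp (\<i> * complex_of_real (- Arg (cnj (h $ i) * f $ i))) * cnj (h $ i) * f $ i
         = complex_of_real (cmod (f $ i) * cmod (h $ i))" .
    qed
    also have "\<dots> = complex_of_real ?S" by simp
    finally have eq: "(\<Sum>i<N. exp (\<i> * complex_of_real (- Arg (cnj (h $ i) * f $ i))) * cnj (h $ i) * f $ i)
        = complex_of_real ?S" .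
    have nn: "?S \<ge> 0" by (simp add: sum_nonneg)
    show ?thesis unfolding sinr_def eq norm_of_real abs_of_nonneg[OF nn] ..
  qed
  have "sinr N sigma2 h f phi \<le> ?S\<^sup>2 / sigma2" for phi
  proof -
    have "cmod (\<Sum>i<N. exp (\<i> * complex_of_real (phi i)) * cnj (h $ i) * f $ i)
        \<le> (\<Sum>i<N. cmod (exp (\<i> * complex_of_real (phi i)) * cnj (h $ i) * f $ i))"
      by (rule norm_sum)
    also have "\<dots> = ?S"
    proof (rule sum.cong[OF refl])
      fix i
      have "cmod (exp (\<i> * complex_of_real (phi i))) = 1" by (simp add: norm_exp_i_times)
      then show "cmod (exp (\<i> * complex_of_real (phi i)) * cnj (h $ i) * f $ i) = cmod (f $ i) * cmod (h $ i)"
        by (simp add: norm_mult)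
    qed
    finally have "cmod (\<Sum>i<N. exp (\<i> * complex_of_real (phi i)) * cnj (h $ i) * f $ i) \<le> ?S" .
    then have "(cmod (\<Sum>i<N. exp (\<i> * complex_of_real (phi i)) * cnj (h $ i) * f $ i))\<^sup>2 \<le> ?S\<^sup>2"
      by (intro power_mono) auto
    then show ?thesis unfolding sinr_def using sigma by (simp add: divide_right_mono)
  qed
  then show ?thesis using opt by simp
qed



lemma Q2H_carrier[simp]: "Q2H M N K Ud Hf hf \<in> carrier_mat M (N*K+Ud)"
  by (simp add: Q2H_def)

lemma Q2H_dims[simp]: "dim_row (Q2H M N K Ud Hf hf) = M" "dim_col (Q2H M N K Ud Hf hf) = N*K+Ud"
  by (simp_all add: Q2H_def)

lemma cT_carrier: "A \<in> carrier_mat m n \<Longrightarrow> cT A \<in> carrier_mat n m"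
  by (simp add: cT_def)

lemma cT_dims[simp]: "dim_row (cT A) = dim_col A" "dim_col (cT A) = dim_row A"
  by (simp_all add: cT_def)

lemma G_carrier: "cT (Q2H M N K Ud Hf hf) * Q2H M N K Ud Hf hf \<in> carrier_mat (N*K+Ud) (N*K+Ud)"
  by (rule mult_carrier_mat[OF cT_carrier[OF Q2H_carrier] Q2H_carrier])

lemma G_entry:
  assumes i: "i < N*K+Ud" and j: "j < N*K+Ud"
  shows "(cT (Q2H M N K Ud Hf hf) * Q2H M N K Ud Hf hf) $$ (i,j)
     = (\<Sum>m\<in>{0..<M}. cnj (Q2H M N K Ud Hf hf $$ (m,i)) * Q2H M N K Ud Hf hf $$ (m,j))"
proof -
  let ?Q = "Q2H M N K Ud Hf hf"
  have "(cT ?Q * ?Q) $$ (i,j) = (\<Sum>m\<in>{0..<M}. cT ?Q $$ (i,m) * ?Q $$ (m,j))"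
    using i j by (simp add: scalar_prod_def)
  also have "\<dots> = (\<Sum>m\<in>{0..<M}. cnj (?Q $$ (m,i)) * ?Q $$ (m,j))"
  proof (rule sum.cong[OF refl])
    fix m assume "m \<in> {0..<M}"
    then show "cT ?Q $$ (i,m) * ?Q $$ (m,j) = cnj (?Q $$ (m,i)) * ?Q $$ (m,j)"
      using i unfolding cT_def by simp
  qed
  finally show ?thesis .
qed

lemma cTH_Q:
  assumes k: "k < K" and Hk: "Hf k \<in> carrier_mat M N"
  shows "cT (Hf k) * Q2H M N K Ud Hf hf = Sel N (N*K+Ud) k * (cT (Q2H M N K Ud Hf hf) * Q2H M N K Ud Hf hf)"
proof (rule eq_matI)
  let ?Q = "Q2H M N K Ud Hf hf"
  show "dim_row (cT (Hf k) * ?Q) = dim_row (Sel N (N*K+Ud) k * (cT ?Q * ?Q))"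
    "dim_col (cT (Hf k) * ?Q) = dim_col (Sel N (N*K+Ud) k * (cT ?Q * ?Q))"
    using carrier_matD[OF Hk] by simp_all
  fix a j assume "a < dim_row (Sel N (N*K+Ud) k * (cT ?Q * ?Q))" "j < dim_col (Sel N (N*K+Ud) k * (cT ?Q * ?Q))"
  then have a: "a < N" and j: "j < N*K+Ud" by (simp_all add: Q2H_def)
  have lt: "k*N + a < N*K" using mult_mod_lt[OF k a] .
  have "(Sel N (N*K+Ud) k * (cT ?Q * ?Q)) $$ (a,j) = (cT ?Q * ?Q) $$ (k*N+a, j)"
    using Sel_mult[OF G_carrier a j] lt by simp
  also have "\<dots> = (\<Sum>m\<in>{0..<M}. cnj (?Q $$ (m,k*N+a)) * ?Q $$ (m,j))"
    using G_entry[of "k*N+a" N K Ud j] lt j by simp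
  also have "\<dots> = (\<Sum>m\<in>{0..<M}. cnj (Hf k $$ (m,a)) * ?Q $$ (m,j))"
  proof (rule sum.cong[OF refl])
    fix m assume "m \<in> {0..<M}"
    then have "?Q $$ (m, k*N+a) = Hf k $$ (m,a)" using lt a unfolding Q2H_def by simp
    then show "cnj (?Q $$ (m,k*N+a)) * ?Q $$ (m,j) = cnj (Hf k $$ (m,a)) * ?Q $$ (m,j)" by simp
  qed
  also have "\<dots> = (cT (Hf k) * ?Q) $$ (a,j)"
  proof -
    have "(cT (Hf k) * ?Q) $$ (a,j) = (\<Sum>m\<in>{0..<M}. cT (Hf k) $$ (a,m) * ?Q $$ (m,j))"
      using Hk a j unfolding carrier_mat_def by (simp add: scalar_prod_def)
    also have "\<dots> = (\<Sum>m\<in>{0..<M}. cnj (Hf k $$ (m,a)) * ?Q $$ (m,j))"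
    proof (rule sum.cong[OF refl])
      fix m assume "m \<in> {0..<M}"
      then show "cT (Hf k) $$ (a,m) * ?Q $$ (m,j) = cnj (Hf k $$ (m,a)) * ?Q $$ (m,j)"
        using Hk a unfolding cT_def carrier_mat_def by simp
    qed
    finally show ?thesis by simp
  qed
  finally show "(cT (Hf k) * ?Q) $$ (a,j) = (Sel N (N*K+Ud) k * (cT ?Q * ?Q)) $$ (a,j)" by simp
qed

lemma zf_ones:
  assumes k: "k < K" and Hk: "Hf k \<in> carrier_mat M N"
    and d: "det (cT (Q2H M N K Ud Hf hf) * Q2H M N K Ud Hf hf) \<noteq> 0"
  shows "zf_vec M N K Ud Hf hf k = vec N (\<lambda>_. 1)"
proof -
  let ?Q = "Q2H M N K Ud Hf hf" let ?G = "cT ?Q * ?Q" let ?S = "Sel N (N*K+Ud) k"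
  have GC: "?G \<in> carrier_mat (N*K+Ud) (N*K+Ud)" by (rule G_carrier)
  have MC: "minv ?G \<in> carrier_mat (N*K+Ud) (N*K+Ud)" by (rule minv_carrier[OF GC])
  have GG: "?G * minv ?G = 1\<^sub>m (N*K+Ud)" by (rule minv_right[OF GC d])
  have "cT (Hf k) * ?Q * minv ?G * Gamma N K Ud = ?S * ?G * minv ?G * Gamma N K Ud"
    unfolding cTH_Q[of k K Hf M N Ud hf, OF k Hk] by simp
  also have "\<dots> = ?S * (?G * minv ?G) * Gamma N K Ud"
    using assoc_mult_mat[OF Sel_carrier GC MC] by simp
  also have "\<dots> = ?S * Gamma N K Ud" unfolding GG using right_mult_one_mat[OF Sel_carrier] by simp
  finally show ?thesis unfolding zf_vec_def Let_def using Sel_Gamma[OF k] by simp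
qed



lemma det_tendsto:
  assumes A: "\<And>M. A M \<in> carrier_mat n n" and B: "B \<in> carrier_mat n n"
    and lim: "\<And>i j. i < n \<Longrightarrow> j < n \<Longrightarrow> ((\<lambda>M. A M $$ (i,j)) \<longlongrightarrow> B $$ (i,j)) sequentially"
  shows "((\<lambda>M. det (A M)) \<longlongrightarrow> det (B :: complex mat)) sequentially"
proof -
  have "((\<lambda>M. \<Sum>p\<in>{p. p permutes {0..<n}}. signof p * (\<Prod>i = 0..<n. A M $$ (i, p i)))
     \<longlongrightarrow> (\<Sum>p\<in>{p. p permutes {0..<n}}. signof p * (\<Prod>i = 0..<n. B $$ (i, p i)))) sequentially"
  proof (intro tendsto_sum tendsto_mult tendsto_const tendsto_prod)
    fix p i assume p: "p \<in> {p. p permutes {0..<n}}" and i: "i \<in> {0..<n}"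
    then have "p i \<in> {0..<n}" using permutes_in_image[of p "{0..<n}" i] by simp
    then show "((\<lambda>M. A M $$ (i, p i)) \<longlongrightarrow> B $$ (i, p i)) sequentially" using lim i by simp
  qed
  then show ?thesis using det_def'[OF A] det_def'[OF B] by simp
qed

lemma det_L:
  assumes Rdim: "\<And>n. n < K \<Longrightarrow> R n \<in> carrier_mat N N"
    and Rinv: "\<And>n. n < K \<Longrightarrow> invertible_mat (R n)"
  shows "det (Lmat N K Ud R) \<noteq> 0"
proof -
  have "det (Lmat N K Ud R) * det (blkdiag_inv N K Ud R) = det (1\<^sub>m (N*K+Ud))"
  proof -
    have "Lmat N K Ud R * blkdiag_inv N K Ud R = 1\<^sub>m (N*K+Ud)" by (rule LB[OF Rdim Rinv])
    then show ?thesis using det_mult[OF Lmat_carrier[of N K Ud R] binv_carrier[of N K Ud R]] by simp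
  qed
  then show ?thesis by auto
qed

lemma G_tendsto:
  fixes H :: "nat \<Rightarrow> nat \<Rightarrow> complex mat" and hdu :: "nat \<Rightarrow> nat \<Rightarrow> complex vec"
  assumes Hdim: "\<And>M n. n < K \<Longrightarrow> H M n \<in> carrier_mat M N"
    and hddim: "\<And>M u. u < Ud \<Longrightarrow> dim_vec (hdu M u) = M"
    and Rdim: "\<And>n. n < K \<Longrightarrow> R n \<in> carrier_mat N N"
    and lim_HH: "\<And>n n'. n < K \<Longrightarrow> n' < K \<Longrightarrow>
        mat_tendsto (\<lambda>M. cT (H M n) * H M n') (if n = n' then R n else 0\<^sub>m N N)"
    and lim_Hhd: "\<And>n u. n < K \<Longrightarrow> u < Ud \<Longrightarrow>
        vec_tendsto (\<lambda>M. cT (H M n) *\<^sub>v hdu M u) (0\<^sub>v N)"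
    and lim_hdhd: "\<And>u u'. u < Ud \<Longrightarrow> u' < Ud \<Longrightarrow>
        ((\<lambda>M. \<Sum>i<M. cnj (hdu M u $ i) * hdu M u' $ i) \<longlongrightarrow> (if u = u' then 1 else 0)) sequentially"
    and i: "i < N*K+Ud" and j: "j < N*K+Ud"
  shows "((\<lambda>M. (cT (Q2H M N K Ud (H M) (hdu M)) * Q2H M N K Ud (H M) (hdu M)) $$ (i,j))
           \<longlongrightarrow> Lmat N K Ud R $$ (i,j)) sequentially"
proof -
  let ?Q = "\<lambda>M. Q2H M N K Ud (H M) (hdu M)"
  have GE: "\<And>M. (cT (?Q M) * ?Q M) $$ (i,j) = (\<Sum>m\<in>{0..<M}. cnj (?Q M $$ (m,i)) * ?Q M $$ (m,j))"
    using G_entry[OF i j] by blast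
  have Qlt: "\<And>M m l. m < M \<Longrightarrow> l < N*K \<Longrightarrow> ?Q M $$ (m,l) = H M (l div N) $$ (m, l mod N)"
    using i by (simp add: Q2H_def)
  have Qge: "\<And>M m l. m < M \<Longrightarrow> l < N*K+Ud \<Longrightarrow> \<not> l < N*K \<Longrightarrow> ?Q M $$ (m,l) = hdu M (l - N*K) $ m"
    by (simp add: Q2H_def)
  show ?thesis
  proof (cases "i < N*K")
    case iT: True
    define a where "a = i div N"
    have a: "a < K" using div_lt_K[OF iT] a_def by simp
    have N0: "0 < N" using iT by (cases N) auto
    have im: "i mod N < N" using N0 by simp
    have Ha: "\<And>M. dim_row (H M a) = M \<and> dim_col (H M a) = N" using Hdim[OF a] by auto
    show ?thesis
    proof (cases "j < N*K")
      case jT: True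
      define b where "b = j div N"
      have b: "b < K" using div_lt_K[OF jT] b_def by simp
      have jm: "j mod N < N" using N0 by simp
      have Hb: "\<And>M. dim_row (H M b) = M \<and> dim_col (H M b) = N" using Hdim[OF b] by auto
      let ?C = "if a = b then R a else 0\<^sub>m N N"
      have Cd: "dim_row ?C = N" "dim_col ?C = N" using Rdim[OF a] by auto
      have eq: "(cT (?Q M) * ?Q M) $$ (i,j) = (cT (H M a) * H M b) $$ (i mod N, j mod N)" for M
      proof -
        have "(cT (H M a) * H M b) $$ (i mod N, j mod N) = (\<Sum>m\<in>{0..<M}. cT (H M a) $$ (i mod N, m) * H M b $$ (m, j mod N))"
          using Ha Hb im jm by (simp add: scalar_prod_def)
        also have "\<dots> = (\<Sum>m\<in>{0..<M}. cnj (?Q M $$ (m,i)) * ?Q M $$ (m,j))"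
        proof (rule sum.cong[OF refl])
          fix m assume "m \<in> {0..<M}"
          then have m: "m < M" by simp
          show "cT (H M a) $$ (i mod N, m) * H M b $$ (m, j mod N) = cnj (?Q M $$ (m,i)) * ?Q M $$ (m,j)"
            using Qlt[OF m iT] Qlt[OF m jT] a_def b_def Ha m im unfolding cT_def by simp
        qed
        finally show ?thesis using GE by simp
      qed
      have "((\<lambda>M. (cT (H M a) * H M b) $$ (i mod N, j mod N)) \<longlongrightarrow> ?C $$ (i mod N, j mod N)) sequentially"
        using lim_HH[OF a b] Cd im jm unfolding mat_tendsto_def by simp
      moreover have "?C $$ (i mod N, j mod N) = Lmat N K Ud R $$ (i,j)"
        using iT jT a_def b_def im jm i j by (simp add: Lmat_def)
      ultimately show ?thesis unfolding eq by simp
    next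
      case jF: False
      define u where "u = j - N*K"
      have u: "u < Ud" using j jF u_def by simp
      have eq: "(cT (?Q M) * ?Q M) $$ (i,j) = (cT (H M a) *\<^sub>v hdu M u) $ (i mod N)" for M
      proof -
        have "(cT (H M a) *\<^sub>v hdu M u) $ (i mod N) = (\<Sum>m\<in>{0..<M}. cT (H M a) $$ (i mod N, m) * hdu M u $ m)"
          using Ha im hddim[OF u] by (simp add: scalar_prod_def)
        also have "\<dots> = (\<Sum>m\<in>{0..<M}. cnj (?Q M $$ (m,i)) * ?Q M $$ (m,j))"
        proof (rule sum.cong[OF refl])
          fix m assume "m \<in> {0..<M}"
          then have m: "m < M" by simp
          show "cT (H M a) $$ (i mod N, m) * hdu M u $ m = cnj (?Q M $$ (m,i)) * ?Q M $$ (m,j)"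
            using Qlt[OF m iT] Qge[OF m j jF] a_def u_def Ha m im unfolding cT_def by simp
        qed
        finally show ?thesis using GE by simp
      qed
      have "((\<lambda>M. (cT (H M a) *\<^sub>v hdu M u) $ (i mod N)) \<longlongrightarrow> (0\<^sub>v N :: complex vec) $ (i mod N)) sequentially"
        using lim_Hhd[OF a u] im unfolding vec_tendsto_def by simp
      moreover have "Lmat N K Ud R $$ (i,j) = 0" using iT jF i j by (simp add: Lmat_def)
      ultimately show ?thesis unfolding eq using im by simp
    qed
  next
    case iF: False
    define u where "u = i - N*K"
    have u: "u < Ud" using i iF u_def by simp
    show ?thesis
    proof (cases "j < N*K")
      case jT: True
      define b where "b = j div N"
      have b: "b < K" using div_lt_K[OF jT] b_def by simp
      have N0: "0 < N" using jT by (cases N) auto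
      have jm: "j mod N < N" using N0 by simp
      have Hb: "\<And>M. dim_row (H M b) = M \<and> dim_col (H M b) = N" using Hdim[OF b] by auto
      have eq: "(cT (?Q M) * ?Q M) $$ (i,j) = cnj ((cT (H M b) *\<^sub>v hdu M u) $ (j mod N))" for M
      proof -
        have "(cT (H M b) *\<^sub>v hdu M u) $ (j mod N) = (\<Sum>m\<in>{0..<M}. cT (H M b) $$ (j mod N, m) * hdu M u $ m)"
          using Hb jm hddim[OF u] by (simp add: scalar_prod_def)
        then have "cnj ((cT (H M b) *\<^sub>v hdu M u) $ (j mod N)) = (\<Sum>m\<in>{0..<M}. cnj (cT (H M b) $$ (j mod N, m) * hdu M u $ m))"
          by (simp add: cnj_sum)
        also have "\<dots> = (\<Sum>m\<in>{0..<M}. cnj (?Q M $$ (m,i)) * ?Q M $$ (m,j))"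
        proof (rule sum.cong[OF refl])
          fix m assume "m \<in> {0..<M}"
          then have m: "m < M" by simp
          show "cnj (cT (H M b) $$ (j mod N, m) * hdu M u $ m) = cnj (?Q M $$ (m,i)) * ?Q M $$ (m,j)"
            using Qlt[OF m jT] Qge[OF m i iF] b_def u_def Hb m jm unfolding cT_def by (simp add: mult.commute)
        qed
        finally show ?thesis using GE by simp
      qed
      have "((\<lambda>M. (cT (H M b) *\<^sub>v hdu M u) $ (j mod N)) \<longlongrightarrow> (0\<^sub>v N :: complex vec) $ (j mod N)) sequentially"
        using lim_Hhd[OF b u] jm unfolding vec_tendsto_def by simp
      then have "((\<lambda>M. cnj ((cT (H M b) *\<^sub>v hdu M u) $ (j mod N))) \<longlongrightarrow> cnj 0) sequentially"
        using jm by (intro tendsto_cnj) simp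
      moreover have "Lmat N K Ud R $$ (i,j) = 0" using iF jT i j by (simp add: Lmat_def)
      ultimately show ?thesis unfolding eq by simp
    next
      case jF: False
      define u' where "u' = j - N*K"
      have u': "u' < Ud" using j jF u'_def by simp
      have eq: "(cT (?Q M) * ?Q M) $$ (i,j) = (\<Sum>m<M. cnj (hdu M u $ m) * hdu M u' $ m)" for M
      proof -
        have "(\<Sum>m\<in>{0..<M}. cnj (?Q M $$ (m,i)) * ?Q M $$ (m,j)) = (\<Sum>m\<in>{0..<M}. cnj (hdu M u $ m) * hdu M u' $ m)"
        proof (rule sum.cong[OF refl])
          fix m assume "m \<in> {0..<M}"
          then have m: "m < M" by simp
          show "cnj (?Q M $$ (m,i)) * ?Q M $$ (m,j) = cnj (hdu M u $ m) * hdu M u' $ m"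
            using Qge[OF m i iF] Qge[OF m j jF] u_def u'_def by simp
        qed
        then show ?thesis using GE by (simp add: atLeast0LessThan)
      qed
      have "Lmat N K Ud R $$ (i,j) = (if u = u' then 1 else 0)"
        using iF jF i j u_def u'_def by (auto simp add: Lmat_def)
      then show ?thesis unfolding eq using lim_hdhd[OF u u'] by simp
    qed
  qed
qed


theorem proposition2:
  fixes N K Ud k :: nat
    and H :: "nat \<Rightarrow> nat \<Rightarrow> complex mat"   \<comment> \<open>H M n: BS--RIS-n channel with M BS antennas\<close>
    and hdu :: "nat \<Rightarrow> nat \<Rightarrow> complex vec"   \<comment> \<open>hdu M u: BS--direct-user-u channel\<close>
    and R :: "nat \<Rightarrow> complex mat"
    and h :: "complex vec"                   \<comment> \<open>RIS-k--user channel h_{k,1}\<close>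
    and sigma2 :: real
  assumes k: "k < K"
    and sigma: "sigma2 > 0"
    and hdim: "dim_vec h = N"
    and Hdim: "\<And>M n. n < K \<Longrightarrow> H M n \<in> carrier_mat M N"
    and hddim: "\<And>M u. u < Ud \<Longrightarrow> dim_vec (hdu M u) = M"
    and Rdim: "\<And>n. n < K \<Longrightarrow> R n \<in> carrier_mat N N"
    and Rinv: "\<And>n. n < K \<Longrightarrow> invertible_mat (R n)"
    and lim_HH: "\<And>n n'. n < K \<Longrightarrow> n' < K \<Longrightarrow>
        mat_tendsto (\<lambda>M. cT (H M n) * H M n') (if n = n' then R n else 0\<^sub>m N N)"
    and lim_Hhd: "\<And>n u. n < K \<Longrightarrow> u < Ud \<Longrightarrow>
        vec_tendsto (\<lambda>M. cT (H M n) *\<^sub>v hdu M u) (0\<^sub>v N)"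
    and lim_hdhd: "\<And>u u'. u < Ud \<Longrightarrow> u' < Ud \<Longrightarrow>
        ((\<lambda>M. \<Sum>i<M. cnj (hdu M u $ i) * hdu M u' $ i) \<longlongrightarrow> (if u = u' then 1 else 0)) sequentially"
  shows "(\<forall>phi. ((\<lambda>M. sinr N sigma2 h (zf_vec M N K Ud (H M) (hdu M) k) phi)
                   \<longlongrightarrow> sinr N sigma2 h (f_vec N K Ud R k) phi) sequentially)
       \<and> (let f = f_vec N K Ud R k;
              phiopt = (\<lambda>i. - Arg (cnj (h $ i) * f $ i))
          in (\<forall>phi. sinr N sigma2 h f phi \<le> sinr N sigma2 h f phiopt)
             \<and> sinr N sigma2 h f phiopt = (\<Sum>i<N. cmod (f $ i) * cmod (h $ i))\<^sup>2 / sigma2)"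
  proof -
  let ?G = "\<lambda>M. cT (Q2H M N K Ud (H M) (hdu M)) * Q2H M N K Ud (H M) (hdu M)"
  have Gt: "((\<lambda>M. det (?G M)) \<longlongrightarrow> det (Lmat N K Ud R)) sequentially"
  proof (rule det_tendsto)
    show "\<And>M. ?G M \<in> carrier_mat (N*K+Ud) (N*K+Ud)" by (rule G_carrier)
    show "Lmat N K Ud R \<in> carrier_mat (N*K+Ud) (N*K+Ud)" by simp
    fix i j assume "i < N*K+Ud" "j < N*K+Ud"
    then show "((\<lambda>M. ?G M $$ (i,j)) \<longlongrightarrow> Lmat N K Ud R $$ (i,j)) sequentially"
      using G_tendsto[OF Hdim hddim Rdim lim_HH lim_Hhd lim_hdhd] by blast
  qed
  have ev: "\<forall>\<^sub>F M in sequentially. det (?G M) \<noteq> 0"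
    by (rule tendsto_imp_eventually_ne[OF Gt det_L[OF Rdim Rinv]])
  have fo: "f_vec N K Ud R k = vec N (\<lambda>_. 1)" by (rule f_vec_ones[OF k Rdim Rinv])
  have ev2: "\<forall>\<^sub>F M in sequentially. zf_vec M N K Ud (H M) (hdu M) k = f_vec N K Ud R k"
    using ev
  proof (rule eventually_mono)
    fix M assume "det (?G M) \<noteq> 0"
    then show "zf_vec M N K Ud (H M) (hdu M) k = f_vec N K Ud R k"
      unfolding fo by (rule zf_ones[of k K "H M" M N Ud "hdu M", OF k Hdim[OF k]])
  qed
  have part1: "\<forall>phi. ((\<lambda>M. sinr N sigma2 h (zf_vec M N K Ud (H M) (hdu M) k) phi)
                   \<longlongrightarrow> sinr N sigma2 h (f_vec N K Ud R k) phi) sequentially"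
  proof
    fix phi
    show "((\<lambda>M. sinr N sigma2 h (zf_vec M N K Ud (H M) (hdu M) k) phi)
                   \<longlongrightarrow> sinr N sigma2 h (f_vec N K Ud R k) phi) sequentially"
      by (rule tendsto_eventually) (use ev2 in \<open>auto elim: eventually_mono\<close>)
  qed
  show ?thesis unfolding Let_def using part1 sinr_opt[OF sigma, of N h "f_vec N K Ud R k"] by blast
qed

end
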